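(* Let $G$ be a non-complete double-critical $k$-chromatic graph and let $xy\in E(G)$. If $A(xy)$ is non-empty, then the induced subgraph $G[A(xy)]$ has no isolated vertices, i.e. $\delta(G[A(xy)])\ge 1$. Similarly, if $C(xy)$ is non-empty, then $\delta(G[C(xy)])\ge 1$.
   Context: All graphs are finite and simple. A graph $G$ is (vertex-)critical if $\chi(G-v)<\chi(G)$ for every vertex $v\in V(G)$. A critical graph $G$ is double-critical if $\chi(G-x-y)\le\chi(G)-2$ for every edge $xy\in E(G)$. For an edge $xy$, $A(xy):=N(x)\setminus N[y]$ and $C(xy):=N(y)\setminus N[x]$, where $N(v)$ is the open and $N[v]=N(v)\cup\{v\}$ the closed neighbourhood. *)

theory Defs
  imports Main
begin

definition graph :: "'a set \<Rightarrow> 'a set set \<Rightarrow> bool" where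
  "graph V E \<longleftrightarrow> finite V \<and> (\<forall>e\<in>E. e \<subseteq> V \<and> card e = 2)"

definition adj :: "'a set set \<Rightarrow> 'a \<Rightarrow> 'a \<Rightarrow> bool" where
  "adj E u v \<longleftrightarrow> {u, v} \<in> E"

definition nbhd :: "'a set \<Rightarrow> 'a set set \<Rightarrow> 'a \<Rightarrow> 'a set" where
  "nbhd V E v = {u \<in> V. adj E v u}"

definition cnbhd :: "'a set \<Rightarrow> 'a set set \<Rightarrow> 'a \<Rightarrow> 'a set" where
  "cnbhd V E v = insert v (nbhd V E v)"

definition induced_edges :: "'a set set \<Rightarrow> 'a set \<Rightarrow> 'a set set" where
  "induced_edges E S = {e \<in> E. e \<subseteq> S}"

definition proper_colouring :: "'a set \<Rightarrow> 'a set set \<Rightarrow> ('a \<Rightarrow> nat) \<Rightarrow> nat \<Rightarrow> bool" where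
  "proper_colouring V E c k \<longleftrightarrow> (\<forall>v\<in>V. c v < k) \<and> (\<forall>u\<in>V. \<forall>v\<in>V. adj E u v \<longrightarrow> c u \<noteq> c v)"

definition chromatic_number :: "'a set \<Rightarrow> 'a set set \<Rightarrow> nat" where
  "chromatic_number V E = (LEAST k. \<exists>c. proper_colouring V E c k)"

definition vertex_critical :: "'a set \<Rightarrow> 'a set set \<Rightarrow> bool" where
  "vertex_critical V E \<longleftrightarrow>
     (\<forall>v\<in>V. chromatic_number (V - {v}) (induced_edges E (V - {v})) < chromatic_number V E)"

definition double_critical :: "'a set \<Rightarrow> 'a set set \<Rightarrow> bool" where
  "double_critical V E \<longleftrightarrow> vertex_critical V E \<and>
     (\<forall>x y. {x, y} \<in> E \<longrightarrow>
        chromatic_number (V - {x, y}) (induced_edges E (V - {x, y})) + 2 \<le> chromatic_number V E)"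

definition complete_graph :: "'a set \<Rightarrow> 'a set set \<Rightarrow> bool" where
  "complete_graph V E \<longleftrightarrow> (\<forall>u\<in>V. \<forall>v\<in>V. u \<noteq> v \<longrightarrow> adj E u v)"

definition A_set :: "'a set \<Rightarrow> 'a set set \<Rightarrow> 'a \<Rightarrow> 'a \<Rightarrow> 'a set" where
  "A_set V E x y = nbhd V E x - cnbhd V E y"

definition C_set :: "'a set \<Rightarrow> 'a set set \<Rightarrow> 'a \<Rightarrow> 'a \<Rightarrow> 'a set" where
  "C_set V E x y = nbhd V E y - cnbhd V E x"

definition no_isolated_in_induced :: "'a set set \<Rightarrow> 'a set \<Rightarrow> bool" where
  "no_isolated_in_induced E S \<longleftrightarrow> (\<forall>v\<in>S. \<exists>u\<in>S. adj (induced_edges E S) v u)"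

end

theory Submission
  imports Defs
begin

lemma adj_sym: "adj E u v = adj E v u"
  by (simp add: adj_def insert_commute)

lemma adj_neq: "graph V E \<Longrightarrow> adj E u v \<Longrightarrow> u \<noteq> v"
  unfolding graph_def adj_def by fastforce

lemma adj_V: "graph V E \<Longrightarrow> adj E u v \<Longrightarrow> u \<in> V \<and> v \<in> V"
  unfolding graph_def adj_def by blast

lemma colouring_exists:
  assumes "finite S" "\<And>u v. adj F u v \<Longrightarrow> u \<noteq> v"
  shows "\<exists>k c. proper_colouring S F c k"
proof -
  obtain f where f: "bij_betw f S {0..<card S}"
    using assms ex_bij_betw_finite_nat by blast
  have "proper_colouring S F f (card S)"
    unfolding proper_colouring_def
  proof (intro conjI ballI impI)
    fix v assume "v \<in> S" thus "f v < card S" using f by (auto simp: bij_betw_def)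
  next
    fix u v assume "u \<in> S" "v \<in> S" "adj F u v"
    thus "f u \<noteq> f v" using f assms(2) by (metis bij_betw_def inj_on_def)
  qed
  thus ?thesis by blast
qed

lemma adj_induced: "adj (induced_edges E S) u v \<longleftrightarrow> adj E u v \<and> u \<in> S \<and> v \<in> S"
  by (auto simp: adj_def induced_edges_def)

lemma keyA:
  assumes G: "graph V E" and dc: "double_critical V E" and xy: "{x, y} \<in> E"
    and a: "a \<in> A_set V E x y" and iso: "\<not> (\<exists>u\<in>A_set V E x y. adj E a u)"
  shows False
proof -
  let ?S = "V - {x, a}"
  let ?F = "induced_edges E ?S"
  have ax: "adj E x a" and ay: "\<not> adj E y a" "a \<noteq> y" and aV: "a \<in> V"
    using a by (auto simp: A_set_def nbhd_def cnbhd_def)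
  have xa: "{x, a} \<in> E" using ax by (simp add: adj_def)
  have xyadj: "adj E x y" using xy by (simp add: adj_def)
  have yS: "y \<in> ?S" using adj_V[OF G xyadj] adj_neq[OF G xyadj] ay by auto
  have fin: "finite ?S" using G by (auto simp: graph_def)
  have "\<exists>k c. proper_colouring ?S ?F c k"
    by (rule colouring_exists[OF fin]) (auto simp: adj_induced dest: adj_neq[OF G])
  then have "\<exists>c. proper_colouring ?S ?F c (chromatic_number ?S ?F)" unfolding chromatic_number_def by (rule LeastI_ex)
  then obtain c where c: "proper_colouring ?S ?F c (chromatic_number ?S ?F)" by blast

  define m where "m = chromatic_number ?S ?F"
  have m2: "m + 2 \<le> chromatic_number V E"
    using dc xa unfolding double_critical_def m_def by blast
  have cl: "\<And>v. v \<in> ?S \<Longrightarrow> c v < m" using c unfolding proper_colouring_def m_def by blast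
  have cp: "\<And>u v. u \<in> ?S \<Longrightarrow> v \<in> ?S \<Longrightarrow> adj E u v \<Longrightarrow> c u \<noteq> c v"
    using c unfolding proper_colouring_def by (auto simp: adj_induced)
  define d where "d v = (if v = x then c y else if v = a \<or> (adj E x v \<and> c v = c y) then m else c v)" for v
  have "proper_colouring V E d (m + 1)"
    unfolding proper_colouring_def
  proof (intro conjI ballI impI)
    fix v assume "v \<in> V" thus "d v < m + 1" using cl[of v] cl[OF yS] by (auto simp: d_def)
  next
    fix u v assume uV: "u \<in> V" and vV: "v \<in> V" and uv: "adj E u v"
    have une: "u \<noteq> v" using adj_neq[OF G uv] .
    have vu: "adj E v u" using uv adj_sym by metis
    have inA: "\<And>w. w \<in> V \<Longrightarrow> adj E x w \<Longrightarrow> w \<noteq> y \<Longrightarrow> \<not> adj E y w \<Longrightarrow> w \<in> A_set V E x y"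
      by (auto simp: A_set_def nbhd_def cnbhd_def)
    have noloop: "\<And>w. \<not> adj E w w" using adj_neq[OF G] by blast
    have cyS: "\<And>w. w \<in> ?S \<Longrightarrow> c w = c y \<Longrightarrow> w \<noteq> y \<Longrightarrow> \<not> adj E y w"
      using cp yS by metis
    have Aq: "\<And>q. q \<in> V \<Longrightarrow> adj E a q \<Longrightarrow> q \<noteq> x \<Longrightarrow> adj E x q \<Longrightarrow> c q = c y \<Longrightarrow> False"
    proof -
      fix q assume qV: "q \<in> V" and pq: "adj E a q" and qx: "q \<noteq> x" and xq: "adj E x q" and cq: "c q = c y"
      have qy: "q \<noteq> y" using pq ay adj_sym by metis
      have "q \<in> ?S" using qx qV pq noloop by auto
      hence "\<not> adj E y q" using cyS cq qy by blast
      hence "q \<in> A_set V E x y" using inA xq qV qy by blast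
      thus False using iso pq by blast
    qed
    have one: "\<And>p q. p \<in> V \<Longrightarrow> q \<in> V \<Longrightarrow> adj E p q \<Longrightarrow> adj E q p \<Longrightarrow> p \<noteq> q \<Longrightarrow> p = x \<Longrightarrow> d p \<noteq> d q"
    proof -
      fix p q assume pV: "p \<in> V" and qV: "q \<in> V" and pq: "adj E p q" and qp: "adj E q p" and ne: "p \<noteq> q" and px: "p = x"
      have cym: "c y < m" using cl yS by blast
      show "d p \<noteq> d q"
      proof (cases "q = a \<or> (adj E x q \<and> c q = c y)")
        case True thus ?thesis using px ne cym by (auto simp: d_def)
      next
        case False
        hence "q \<noteq> a" "c q \<noteq> c y" using pq px by auto
        thus ?thesis using px ne by (auto simp: d_def)
      qed
    qed
    have two: "\<And>p q. p \<in> V \<Longrightarrow> q \<in> V \<Longrightarrow> adj E p q \<Longrightarrow> adj E q p \<Longrightarrow> p \<noteq> q \<Longrightarrow> p \<noteq> x \<Longrightarrow> q \<noteq> x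
        \<Longrightarrow> (p = a \<or> (adj E x p \<and> c p = c y)) \<Longrightarrow> d p \<noteq> d q"
    proof -
      fix p q assume pV: "p \<in> V" and qV: "q \<in> V" and pq: "adj E p q" and qp: "adj E q p" and ne: "p \<noteq> q"
        and px: "p \<noteq> x" and qx: "q \<noteq> x" and Bp: "p = a \<or> (adj E x p \<and> c p = c y)"
      have dp: "d p = m" using px Bp by (simp add: d_def)
      show "d p \<noteq> d q"
      proof (cases "q = a \<or> (adj E x q \<and> c q = c y)")
        case True
        show ?thesis
        proof (cases "p = a")
          case True thus ?thesis using Aq[of q] qV pq qx \<open>q = a \<or> _\<close> ne by blast
        next
          case pa: False
          show ?thesis
          proof (cases "q = a")
            case True thus ?thesis using Aq[of p] pV qp px Bp pa by blast
          next
            case False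
            hence "p \<in> ?S" "q \<in> ?S" using pV qV px qx pa by auto
            thus ?thesis using cp[of p q] pq Bp pa False \<open>q = a \<or> _\<close> by auto
          qed
        qed
      next
        case False
        hence "q \<in> ?S" using qV qx by auto
        hence "c q < m" using cl by blast
        thus ?thesis using dp False qx by (simp add: d_def)
      qed
    qed
    show "d u \<noteq> d v"
    proof (cases "u = x \<or> v = x")
      case True thus ?thesis using one[OF uV vV uv vu une] one[OF vV uV vu uv une[symmetric]] by metis
    next
      case F: False
      show ?thesis
      proof (cases "(u = a \<or> (adj E x u \<and> c u = c y)) \<or> (v = a \<or> (adj E x v \<and> c v = c y))")
        case True thus ?thesis using F two[OF uV vV uv vu une] two[OF vV uV vu uv une[symmetric]] by metis
      next
        case False
        hence "u \<in> ?S" "v \<in> ?S" using uV vV F by auto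
        thus ?thesis using cp[of u v] uv F False by (auto simp: d_def)
      qed
    qed
  qed
  hence "chromatic_number V E \<le> m + 1"
    unfolding chromatic_number_def by (blast intro: Least_le)
  thus False using m2 by simp
qed

lemma A_iff: "graph V E \<Longrightarrow> double_critical V E \<Longrightarrow> {x, y} \<in> E \<Longrightarrow>
  no_isolated_in_induced E (A_set V E x y)"
  unfolding no_isolated_in_induced_def
proof
  fix v assume G: "graph V E" "double_critical V E" "{x, y} \<in> E" and v: "v \<in> A_set V E x y"
  then obtain u where "u \<in> A_set V E x y" "adj E v u" using keyA[OF G(1) G(2) G(3) v] by blast
  thus "\<exists>u\<in>A_set V E x y. adj (induced_edges E (A_set V E x y)) v u"
    using v by (auto simp: adj_induced)
qed

theorem proposition9:
  fixes V :: "'a set" and E :: "'a set set" and k :: nat and x y :: 'a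
  assumes "graph V E"
    and "double_critical V E"
    and "chromatic_number V E = k"
    and "\<not> complete_graph V E"
    and "{x, y} \<in> E"
  shows "(A_set V E x y \<noteq> {} \<longrightarrow> no_isolated_in_induced E (A_set V E x y))
       \<and> (C_set V E x y \<noteq> {} \<longrightarrow> no_isolated_in_induced E (C_set V E x y))"
proof -
  have "C_set V E x y = A_set V E y x" by (simp add: A_set_def C_set_def)
  moreover have "{y, x} \<in> E" using assms(5) by (simp add: insert_commute)
  ultimately show ?thesis using A_iff[OF assms(1,2,5)] A_iff[OF assms(1,2) \<open>{y, x} \<in> E\<close>] by simp
qed

end
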